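(* Let $0<\kappa<1$. For $\phi$ near $0$ define $$u(\phi)=\int_0^{\phi} F\!\left(\tfrac14,\tfrac34;\tfrac12;\kappa^2\sin^2\theta\right)\,\mathrm{d}\theta ,$$ let $u\mapsto\phi(u)$ be the local inverse near $0$ with $\phi(0)=0$, let $\psi=\psi(u)$ be defined near $u=0$ with $\psi(0)=0$ and $\sin\psi=\kappa\sin\phi$, and set $d=\cos\psi$. Then, near $u=0$, $$d'=-2\kappa\sin\tfrac12\psi\,\cos\phi,$$ where $'$ denotes differentiation with respect to $u$.
   Context: $F(a,b;c;z)$ denotes the Gauss hypergeometric function ${}_2F_1(a,b;c;z)$. *)

theory Defs
  imports "HOL-Analysis.Analysis"
begin

definition hyp2f1 :: "real \<Rightarrow> real \<Rightarrow> real \<Rightarrow> real \<Rightarrow> real" where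
  "hyp2f1 a b c z =
     (\<Sum>n. pochhammer a n * pochhammer b n / (pochhammer c n * fact n) * z ^ n)"

definition uint :: "real \<Rightarrow> real \<Rightarrow> real" where
  "uint \<kappa> \<phi> =
     (let f = (\<lambda>\<theta>. hyp2f1 (1/4) (3/4) (1/2) (\<kappa>^2 * (sin \<theta>)^2))
      in if 0 \<le> \<phi> then integral {0..\<phi>} f else - integral {\<phi>..0} f)"

end

theory Submission
  imports Defs
begin


lemma frac_aux: "(1/2 + 2*m) * (3/2 + 2*m) / ((2*m+1)*(2*m+2)) = ((1/4 + m)*(3/4+m)/((1/2+m)*(m+1)) :: real)"
proof -
  have a: "(1/2 + 2*m) * (3/2 + 2*m) = 4*((1/4 + m)*(3/4+m))" by algebra
  have b: "(2*m+1)*(2*m+2) = 4*((1/2+m)*(m+1))" by algebra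
  show ?thesis unfolding a b by simp
qed

lemma poch_id: "pochhammer (1/2::real) (2*n) / fact (2*n) =
   pochhammer (1/4) n * pochhammer (3/4) n / (pochhammer (1/2) n * fact n)"
proof (induction n)
  case 0 then show ?case by simp
next
  case (Suc n)
  have e: "2 * Suc n = Suc (Suc (2*n))" by simp
  have "pochhammer (1/2::real) (2 * Suc n) / fact (2 * Suc n)
     = (pochhammer (1/2) (2*n) / fact (2*n)) * ((1/2 + 2*real n) * (3/2 + 2*real n) / ((2*real n+1)*(2*real n+2)))"
    unfolding e by (simp add: pochhammer_Suc field_simps)
  also have "\<dots> = (pochhammer (1/4) n * pochhammer (3/4) n / (pochhammer (1/2) n * fact n)) * ((1/4 + real n)*(3/4+real n)/((1/2+real n)*(real n+1)))"
    unfolding frac_aux Suc ..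
  also have "\<dots> = pochhammer (1/4) (Suc n) * pochhammer (3/4) (Suc n) / (pochhammer (1/2) (Suc n) * fact (Suc n))"
    by (simp add: pochhammer_Suc field_simps)
  finally show ?case .
qed

lemma cg: "((-1/2::real) gchoose k) * (-y)^k = pochhammer (1/2::real) k / fact k * y^k"
proof -
  have m: "(-y)^k = (-1)^k * y^k" by (rule power_minus)
  have o: "(-1::real)^k * (-1)^k = 1" by (simp add: power_mult_distrib[symmetric])
  have "((-1/2::real) gchoose k) = (-1)^k * pochhammer (1/2) k / fact k"
    by (simp add: gbinomial_pochhammer)
  then have "((-1/2::real) gchoose k) * (-y)^k = ((-1)^k * (-1)^k) * (pochhammer (1/2) k / fact k * y^k)"
    unfolding m by (simp only: mult_ac times_divide_eq_left times_divide_eq_right)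
  then show ?thesis unfolding o by simp
qed

lemma hyp_closed:
  fixes x :: real assumes "\<bar>x\<bar> < 1"
  shows "hyp2f1 (1/4) (3/4) (1/2) (x^2) = ((1-x) powr (-1/2) + (1+x) powr (-1/2))/2"
proof -
  define c where "c k = pochhammer (1/2::real) k / fact k" for k
  have s1: "(\<lambda>k. c k * x^k) sums (1-x) powr (-1/2)"
  proof -
    have "(\<lambda>k. ((-1/2::real) gchoose k) * (-x)^k) sums (1 + -x) powr (-1/2)"
      using gen_binomial_real[of "-x" "-1/2"] assms by simp
    then show ?thesis unfolding c_def cg by simp
  qed
  have s2: "(\<lambda>k. c k * (-x)^k) sums (1+x) powr (-1/2)"
  proof -
    have "(\<lambda>k. ((-1/2::real) gchoose k) * (-(-x))^k) sums (1 + x) powr (-1/2)"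
      using gen_binomial_real[of "x" "-1/2"] assms by simp
    then show ?thesis unfolding c_def cg .
  qed
  define f where "f k = (c k * x^k + c k * (-x)^k)/2" for k
  have sf: "f sums (((1-x) powr (-1/2) + (1+x) powr (-1/2))/2)"
    unfolding f_def by (intro sums_divide sums_add s1 s2)
  have z: "f k = 0" if "k \<notin> range (\<lambda>n. 2*n)" for k
  proof -
    have "odd k" using that by (metis evenE rangeI)
    then show ?thesis by (simp add: f_def power_minus_odd)
  qed
  have sm: "strict_mono (\<lambda>n::nat. 2*n)" by (simp add: strict_mono_def)
  have "(\<lambda>n. f (2*n)) sums (((1-x) powr (-1/2) + (1+x) powr (-1/2))/2)"
    using sums_mono_reindex[of "\<lambda>n. 2*n" f, OF sm z] sf by blast
  moreover have "f (2*n) = pochhammer (1/4) n * pochhammer (3/4) n / (pochhammer (1/2) n * fact n) * (x^2)^n" for n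
  proof -
    have "(-x)^(2*n) = x^(2*n)" by (simp add: power_mult)
    then have "f (2*n) = c (2*n) * x^(2*n)" unfolding f_def by simp
    then show ?thesis unfolding c_def poch_id power_mult by simp
  qed
  ultimately have "(\<lambda>n. pochhammer (1/4) n * pochhammer (3/4) n / (pochhammer (1/2) n * fact n) * (x^2)^n) sums (((1-x) powr (-1/2) + (1+x) powr (-1/2))/2)" by simp
  then show ?thesis unfolding hyp2f1_def by (rule sums_unique[symmetric])
qed



definition GG :: "real \<Rightarrow> real \<Rightarrow> real" where
  "GG k t = ((1 - k * sin t) powr (-1/2) + (1 + k * sin t) powr (-1/2))/2"

lemma ksin_bound: "0 \<le> k \<Longrightarrow> k < 1 \<Longrightarrow> \<bar>k * sin t\<bar> < (1::real)"
proof -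
  assume "0 \<le> k" "k < 1"
  have "\<bar>sin t\<bar> \<le> 1" by simp
  then have "\<bar>k * sin t\<bar> \<le> k" using \<open>0 \<le> k\<close> by (simp add: abs_mult mult_left_le)
  then show ?thesis using \<open>k < 1\<close> by linarith
qed

lemma hyp_GG: "0 \<le> k \<Longrightarrow> k < 1 \<Longrightarrow> hyp2f1 (1/4) (3/4) (1/2) (k^2 * (sin t)^2) = GG k t"
  using hyp_closed[OF ksin_bound, of k t] by (simp add: GG_def power_mult_distrib)

lemma GG_cont: "0 \<le> k \<Longrightarrow> k < 1 \<Longrightarrow> continuous_on A (GG k)"
proof -
  assume k: "0 \<le> k" "k < 1"
  have b: "1 - k * sin t > 0" "1 + k * sin t > 0" for t
    using ksin_bound[OF k, of t] by (auto simp: abs_less_iff)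
  show ?thesis unfolding GG_def
    apply (intro continuous_intros)
    apply auto
    using b by (smt (verit))+
qed

lemma GG_pos: "0 \<le> k \<Longrightarrow> k < 1 \<Longrightarrow> GG k t > 0"
  unfolding GG_def using ksin_bound[of k t]
  by (intro divide_pos_pos add_pos_pos) (auto simp: abs_less_iff)

lemma uint_GG: "0 \<le> k \<Longrightarrow> k < 1 \<Longrightarrow>
  uint k p = (if 0 \<le> p then integral {0..p} (GG k) else - integral {p..0} (GG k))"
  unfolding uint_def Let_def using hyp_GG[of k] by simp

lemma uint_deriv:
  assumes "0 \<le> k" "k < 1"
  shows "(uint k has_real_derivative GG k p) (at p)"
proof -
  define a where "a = -\<bar>p\<bar> - 1"
  define b where "b = \<bar>p\<bar> + 1"
  define H where "H x = integral {a..x} (GG k)" for x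
  have ab: "a < p" "p < b" "a < 0" "0 < b" unfolding a_def b_def by auto
  have cont: "continuous_on {a..b} (GG k)" using GG_cont assms by blast
  have int: "GG k integrable_on {c..d}" for c d
    using GG_cont[OF assms, of "{c..d}"] by (rule integrable_continuous_real)
  have eq: "uint k x = H x - H 0" if "x \<in> {a<..<b}" for x
  proof (cases "0 \<le> x")
    case True
    have "integral {a..0} (GG k) + integral {0..x} (GG k) = integral {a..x} (GG k)"
      using True ab by (intro Henstock_Kurzweil_Integration.integral_combine int) auto
    then show ?thesis using True unfolding uint_GG[OF assms] H_def by simp
  next
    case False
    have "integral {a..x} (GG k) + integral {x..0} (GG k) = integral {a..0} (GG k)"
      using False that by (intro Henstock_Kurzweil_Integration.integral_combine int) auto
    then show ?thesis using False unfolding uint_GG[OF assms] H_def by simp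
  qed
  have "(H has_real_derivative GG k p) (at p within {a..b})"
    unfolding H_def using cont ab by (intro integral_has_real_derivative) auto
  then have "(H has_real_derivative GG k p) (at p)"
    using at_within_Icc_at[OF ab(1,2)] by simp
  then have "((\<lambda>x. H x - H 0) has_real_derivative GG k p) (at p)"
    by (auto intro!: derivative_eq_intros)
  then show ?thesis
    by (rule has_field_derivative_transform_within_open[where S="{a<..<b}"])
       (use ab eq in auto)
qed



lemma half_alg:
  fixes y :: real assumes "\<bar>y\<bar> < pi/2"
  shows "((1 - sin y) powr (-1/2) + (1 + sin y) powr (-1/2))/2 * cos y = cos (y/2)"
proof -
  define a where "a = cos (y/2)"
  define b where "b = sin (y/2)"
  have cy: "cos y > 0" using assms by (intro cos_gt_zero_pi) auto
  have a0: "a > 0" unfolding a_def using assms by (intro cos_gt_zero_pi) auto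
  have y2: "y = 2 * (y/2)" by simp
  have sy: "sin y = 2 * b * a" unfolding a_def b_def by (subst y2, subst sin_double) simp
  have cyab: "cos y = (a+b)*(a-b)" unfolding a_def b_def
    by (subst y2, subst cos_double) (simp add: algebra_simps power2_eq_square)
  have ab1: "a^2 + b^2 = 1" unfolding a_def b_def by simp
  have p1: "1 + sin y = (a+b)^2" using sy ab1 by (simp add: power2_eq_square algebra_simps)
  have p2: "1 - sin y = (a-b)^2" using sy ab1 by (simp add: power2_eq_square algebra_simps)
  have apb: "a + b > 0" and amb: "a - b > 0"
  proof -
    have "(a+b)*(a-b) > 0" using cy cyab by simp
    then show "a + b > 0" "a - b > 0" using a0
      by (smt (verit) mult_nonneg_nonpos mult_nonpos_nonneg)+
  qed
  have pw: "x powr (-1/2) = 1 / sqrt x" if "x > 0" for x :: real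
    using that by (simp add: powr_minus_divide powr_half_sqrt[symmetric] del: powr_half_sqrt)
  have "(1 - sin y) powr (-1/2) = 1 / sqrt (1 - sin y)" using amb p2 by (intro pw) simp
  also have "\<dots> = 1/(a-b)" using amb p2 by simp
  finally have e1: "(1 - sin y) powr (-1/2) = 1/(a-b)" .
  have "(1 + sin y) powr (-1/2) = 1 / sqrt (1 + sin y)" using apb p1 by (intro pw) simp
  also have "\<dots> = 1/(a+b)" using apb p1 by simp
  finally have e2: "(1 + sin y) powr (-1/2) = 1/(a+b)" .
  have gen: "\<And>x y z::real. (x+y)/2*z = (x*z+y*z)/2" by (simp add: field_simps)
  have q1: "1/(a-b) * ((a+b)*(a-b)) = a+b" using amb by simp
  have q2: "1/(a+b) * ((a+b)*(a-b)) = a-b" using apb by simp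
  have "(1/(a-b) + 1/(a+b))/2 * ((a+b)*(a-b)) = (1/(a-b) * ((a+b)*(a-b)) + 1/(a+b) * ((a+b)*(a-b)))/2"
    by (rule gen)
  also have "\<dots> = a" unfolding q1 q2 by simp
  finally have "(1/(a-b) + 1/(a+b))/2 * ((a+b)*(a-b)) = a" .
  then show ?thesis unfolding cyab e1 e2 a_def .
qed

theorem theorem2:
  fixes \<kappa> :: real and phi psi :: "real \<Rightarrow> real" and S :: "real set"
  assumes "0 < \<kappa>" and "\<kappa> < 1"
    and "open S" and "0 \<in> S"
    and "phi 0 = 0" and "continuous_on S phi"
    and "\<forall>u\<in>S. uint \<kappa> (phi u) = u"
    and "psi 0 = 0" and "continuous_on S psi"
    and "\<forall>u\<in>S. sin (psi u) = \<kappa> * sin (phi u)"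
  shows "\<forall>\<^sub>F u in nhds 0.
           ((\<lambda>v. cos (psi v)) has_real_derivative
              (- 2 * \<kappa> * sin (psi u / 2) * cos (phi u))) (at u)"
proof -
  have k0: "0 \<le> \<kappa>" using assms(1) by simp
  note k1 = assms(2)
  define T where "T = S \<inter> psi -` {-pi/2<..<pi/2}"
  have oT: "open T" unfolding T_def using assms(3,9)
    by (intro continuous_open_preimage) auto
  have "0 \<in> T" using assms(4,8) by (simp add: T_def)
  then have ev: "eventually (\<lambda>u. u \<in> T) (nhds 0)"
    using oT eventually_nhds_in_open by blast
  show ?thesis using ev
  proof (rule eventually_mono)
    fix u assume uT: "u \<in> T"
    obtain e where e: "e > 0" "ball u e \<subseteq> T" using oT uT open_contains_ball by blast
    have TS: "T \<subseteq> S" unfolding T_def by auto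
    have uS: "u \<in> S" using uT TS by auto
    have ic: "isCont phi u" using assms(3,6) uS continuous_on_eq_continuous_at by blast
    have dphi: "(phi has_real_derivative inverse (GG \<kappa> (phi u))) (at u)"
    proof (rule DERIV_inverse_function[where f="uint \<kappa>" and a="u-e" and b="u+e"])
      show "(uint \<kappa> has_real_derivative GG \<kappa> (phi u)) (at (phi u))"
        by (rule uint_deriv[OF k0 k1])
      show "GG \<kappa> (phi u) \<noteq> 0" using GG_pos[OF k0 k1] by (metis less_irrefl)
      show "u - e < u" "u < u + e" using e by auto
      show "isCont phi u" by (rule ic)
      fix y assume "u - e < y" "y < u + e"
      then have "y \<in> ball u e" by (auto simp: dist_real_def)
      then have "y \<in> S" using e TS by auto
      then show "uint \<kappa> (phi y) = y" using assms(7) by auto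
    qed
    define h where "h v = sqrt (1 - (\<kappa> * sin (phi v))^2)" for v
    have heq: "h v = cos (psi v)" if "v \<in> T" for v
    proof -
      have c: "cos (psi v) > 0" using that unfolding T_def
        by (intro cos_gt_zero_pi) auto
      have "sin (psi v) = \<kappa> * sin (phi v)" using that TS assms(10) by auto
      then have "1 - (\<kappa> * sin (phi v))^2 = (cos (psi v))^2"
        by (simp add: cos_squared_eq)
      then show ?thesis unfolding h_def using c by simp
    qed
    have cpos: "cos (psi u) > 0" using uT unfolding T_def
      by (intro cos_gt_zero_pi) auto
    have spsi: "sin (psi u) = \<kappa> * sin (phi u)" using uS assms(10) by auto
    have w: "1 - (\<kappa> * sin (phi u))^2 = (cos (psi u))^2"
      using spsi by (simp add: cos_squared_eq)
    define G where "G = GG \<kappa> (phi u)"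
    have Gpos: "G > 0" unfolding G_def using GG_pos[OF k0 k1] .
    have d1: "((\<lambda>v. 1 - (\<kappa> * sin (phi v))^2) has_real_derivative
        (-(2 * (\<kappa> * sin (phi u)) * (\<kappa> * (cos (phi u) * inverse G))))) (at u)"
      unfolding G_def
      by (rule derivative_eq_intros dphi refl | simp)+
    have d2: "(sqrt has_real_derivative inverse (sqrt (1 - (\<kappa> * sin (phi u))^2)) / 2)
        (at (1 - (\<kappa> * sin (phi u))^2))"
      by (rule DERIV_real_sqrt) (use w cpos in simp)
    have dh: "(h has_real_derivative
        (inverse (cos (psi u)) / 2 * (-(2 * (\<kappa> * sin (phi u)) * (\<kappa> * (cos (phi u) * inverse G)))))) (at u)"
      unfolding h_def using DERIV_chain2[OF d2 d1] w cpos by simp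
    have hg: "G * cos (psi u) = cos (psi u / 2)"
      using half_alg[of "psi u"] uT spsi unfolding G_def GG_def T_def by auto
    have c2: "cos (psi u / 2) > 0" using uT unfolding T_def
      by (intro cos_gt_zero_pi) auto
    have s2: "sin (psi u) = 2 * sin (psi u / 2) * cos (psi u / 2)"
      using sin_double[of "psi u / 2"] by simp
    have "inverse (cos (psi u)) / 2 * (-(2 * (\<kappa> * sin (phi u)) * (\<kappa> * (cos (phi u) * inverse G))))
        = - (sin (psi u) * \<kappa> * cos (phi u)) / (G * cos (psi u))"
      using cpos Gpos spsi by (simp add: field_simps)
    also have "\<dots> = - (2 * sin (psi u / 2) * cos (psi u / 2) * \<kappa> * cos (phi u)) / cos (psi u / 2)"
      unfolding hg s2 ..
    also have "\<dots> = - 2 * \<kappa> * sin (psi u / 2) * cos (phi u)"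
      using c2 by (simp add: field_simps)
    finally have val: "inverse (cos (psi u)) / 2 * (-(2 * (\<kappa> * sin (phi u)) * (\<kappa> * (cos (phi u) * inverse G))))
        = - 2 * \<kappa> * sin (psi u / 2) * cos (phi u)" .
    show "((\<lambda>v. cos (psi v)) has_real_derivative
              (- 2 * \<kappa> * sin (psi u / 2) * cos (phi u))) (at u)"
      using dh unfolding val
      by (rule has_field_derivative_transform_within_open[OF _ oT uT]) (rule heq)
  qed
qed

end
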